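(* For all integers $L\ge 0$, $p\ge 0$ and $n\ge p$, $$b_L(p,n+1)=\sum_{k=0}^{n-p}\binom{n}{k}\binom{n+1}{k}^{L}b_L(p,k),$$ with $b_L(p,0)=1$, $b_L(p,1)=\cdots=b_L(p,p)=0$ and $b_L(p,p+1)=1$. Consequently all $b_L(p,n)$ are nonnegative integers.
   Context: For an integer $L\ge 0$ let ${}_0F_L(z)=\sum_{n=0}^{\infty}\frac{z^n}{(n!)^{L+1}}$. For an integer $p\ge0$ define the numbers $b_L(p,n)$, $n\ge0$, by the formal power series identity $\exp\Big({}_0F_L(z)-\sum_{k=0}^{p}\frac{z^k}{(k!)^{L+1}}\Big)=\sum_{n=0}^{\infty}b_L(p,n)\frac{z^n}{(n!)^{L+1}}$. *)

theory Defs
  imports "HOL-Computational_Algebra.Formal_Power_Series"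
begin

text \<open>The formal power series  0F_L(z) - sum_{k=0}^{p} z^k/(k!)^(L+1),
  i.e. the tail of 0F_L starting at index p+1 (it has zero constant term).\<close>
definition tailF :: "nat \<Rightarrow> nat \<Rightarrow> real fps" where
  "tailF L p = Abs_fps (\<lambda>n. if n \<le> p then 0 else 1 / (fact n) ^ (L + 1))"

definition expTail :: "nat \<Rightarrow> nat \<Rightarrow> real fps" where
  "expTail L p = fps_exp 1 oo tailF L p"

definition bL :: "nat \<Rightarrow> nat \<Rightarrow> nat \<Rightarrow> real" where
  "bL L p n = fps_nth (expTail L p) n * (fact n) ^ (L + 1)"

end

theory Submission
  imports Defs
begin
unbundle fps_syntax

lemma T0: "tailF L p $ 0 = 0" by (simp add: tailF_def)

lemma E_deriv: "fps_deriv (expTail L p) = expTail L p * fps_deriv (tailF L p)"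
  unfolding expTail_def by (simp add: fps_compose_deriv[OF T0])

lemma e_rec: "of_nat (n+1) * expTail L p $ (n+1)
   = (\<Sum>i=0..n. expTail L p $ i * (of_nat (n - i + 1) * tailF L p $ (n - i + 1)))"
  using arg_cong[OF E_deriv, of "\<lambda>f. f $ n"] by (simp add: fps_mult_nth)

lemma b0: "bL L p 0 = 1"
  by (simp add: bL_def expTail_def T0)

lemma coef:
  assumes "i \<le> n"
  shows "fact (n+1) ^ (L+1) / real (n+1) * (real (n - i + 1) / fact (n - i + 1) ^ (L+1)) / fact i ^ (L+1)
     = real (n choose i) * real ((n + 1) choose i) ^ L"
proof -
  have f1: "(fact (n+1-i) :: real) = real (n+1-i) * fact (n-i)"
    using assms by (metis Suc_diff_le Suc_eq_plus1 fact_Suc of_nat_fact of_nat_mult)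
  have c1: "real ((n+1) choose i) = fact (n+1) / (fact i * fact (n+1-i))"
    using assms by (simp add: binomial_fact)
  have c0: "real (n choose i) = fact n / (fact i * fact (n-i))"
    using assms by (simp add: binomial_fact)
  have c2: "real (n choose i) = real ((n+1) choose i) * real (n+1-i) / real (n+1)"
  proof -
    have d: "real (n+1-i) \<noteq> 0" using assms by simp
    have fs: "(fact (n+1) :: real) = real (n+1) * fact n" by simp
    show ?thesis unfolding c0 c1 f1 fs using d
      by (simp del: of_nat_add of_nat_diff of_nat_Suc add: field_simps)
  qed
  have "real (n choose i) * real ((n + 1) choose i) ^ L = real ((n+1) choose i) ^ (L+1) * real (n+1-i) / real (n+1)"
    unfolding c2 by (simp add: field_simps)
  also have "\<dots> = fact (n+1) ^ (L+1) / real (n+1) * (real (n - i + 1) / fact (n - i + 1) ^ (L+1)) / fact i ^ (L+1)"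
  proof -
    have gen: "\<And>A B d N F::real. A \<noteq> 0 \<Longrightarrow> B \<noteq> 0 \<Longrightarrow> d \<noteq> 0 \<Longrightarrow> N \<noteq> 0 \<Longrightarrow>
      (N*F/(A*(d*B)))^(L+1) * d / N = (N*F)^(L+1) / N * (d / (d*B)^(L+1)) / A^(L+1)"
      by (simp add: power_divide power_mult_distrib field_simps)
    have e1: "n - i + 1 = n+1-i" using assms by simp
    have fs: "(fact (n+1) :: real) = real (n+1) * fact n" by simp
    have d: "real (n+1-i) \<noteq> 0" using assms by simp
    show ?thesis unfolding c1 e1 f1 fs
      by (rule gen) (use d in auto)
  qed
  finally show ?thesis by simp
qed

lemma Enth: "expTail L p $ i = bL L p i / fact i ^ (L+1)"
  by (simp add: bL_def)

lemma small: "n < p \<Longrightarrow> bL L p (n+1) = 0"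
proof -
  assume np: "n < p"
  have "of_nat (n+1) * expTail L p $ (n+1) = 0"
    unfolding e_rec by (rule sum.neutral) (use np in \<open>auto simp: tailF_def\<close>)
  then show ?thesis by (simp add: bL_def del: of_nat_add)
qed

lemma recur:
  assumes np: "p \<le> n"
  shows "bL L p (n + 1) = (\<Sum>k = 0..n - p. real (n choose k) * real ((n + 1) choose k) ^ L * bL L p k)"
proof -
  let ?E = "expTail L p" and ?T = "tailF L p"
  have "(\<Sum>i=0..n. ?E $ i * (of_nat (n - i + 1) * ?T $ (n - i + 1)))
      = (\<Sum>i=0..n-p. ?E $ i * (of_nat (n - i + 1) * ?T $ (n - i + 1)))"
    by (rule sum.mono_neutral_right) (use np in \<open>auto simp: tailF_def\<close>)
  also have "\<dots> = (\<Sum>i=0..n-p. bL L p i / fact i ^ (L+1) * (of_nat (n - i + 1) / fact (n - i + 1) ^ (L+1)))"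
    by (rule sum.cong) (use np in \<open>auto simp: tailF_def Enth\<close>)
  finally have h: "of_nat (n+1) * ?E $ (n+1) = \<dots>" unfolding e_rec .
  have "bL L p (n+1) = fact (n+1) ^ (L+1) / real (n+1) * (of_nat (n+1) * ?E $ (n+1))"
    by (simp add: bL_def del: of_nat_add)
  also have "\<dots> = (\<Sum>i=0..n-p. bL L p i * (fact (n+1) ^ (L+1) / real (n+1) * (real (n - i + 1) / fact (n - i + 1) ^ (L+1)) / fact i ^ (L+1)))"
    unfolding h sum_distrib_left by (rule sum.cong) (auto simp: field_simps)
  also have "\<dots> = (\<Sum>k = 0..n - p. real (n choose k) * real ((n + 1) choose k) ^ L * bL L p k)"
  proof (rule sum.cong)
    fix k assume "k \<in> {0..n-p}"
    then have "k \<le> n" by auto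
    from coef[OF this, of L] show "bL L p k * (fact (n+1) ^ (L+1) / real (n+1) * (real (n - k + 1) / fact (n - k + 1) ^ (L+1)) / fact k ^ (L+1))
      = real (n choose k) * real ((n + 1) choose k) ^ L * bL L p k" by simp
  qed simp
  finally show ?thesis .
qed

lemma nat_valued: "\<exists>m::nat. bL L p n = real m"
proof (induction n rule: less_induct)
  case (less n)
  show ?case
  proof (cases n)
    case 0 then show ?thesis using b0 by (metis of_nat_1)
  next
    case (Suc m)
    show ?thesis
    proof (cases "m < p")
      case True then show ?thesis using small[of m p L] Suc by (metis Suc_eq_plus1 of_nat_0)
    next
      case False
      then have r: "bL L p n = (\<Sum>k = 0..m - p. real (m choose k) * real ((m + 1) choose k) ^ L * bL L p k)"
        using recur[of p m L] Suc by simp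
      have "\<forall>k\<in>{0..m-p}. \<exists>c::nat. real (m choose k) * real ((m + 1) choose k) ^ L * bL L p k = real c"
      proof
        fix k assume "k \<in> {0..m-p}"
        then have "k < n" using Suc by auto
        then obtain c where "bL L p k = real c" using less by blast
        then show "\<exists>c::nat. real (m choose k) * real ((m + 1) choose k) ^ L * bL L p k = real c"
          by (metis of_nat_mult of_nat_power)
      qed
      then obtain f where f: "\<forall>k\<in>{0..m-p}. real (m choose k) * real ((m + 1) choose k) ^ L * bL L p k = real (f k)"
        by metis
      have "bL L p n = real (\<Sum>k=0..m-p. f k)" unfolding r of_nat_sum by (rule sum.cong) (use f in auto)
      then show ?thesis by blast
    qed
  qed
qed

theorem mainTheorem7:
  fixes L p :: nat
  shows "(\<forall>n\<ge>p. bL L p (n + 1) =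
            (\<Sum>k = 0..n - p. real (n choose k) * real ((n + 1) choose k) ^ L * bL L p k))
       \<and> bL L p 0 = 1
       \<and> (\<forall>n\<in>{1..p}. bL L p n = 0)
       \<and> bL L p (p + 1) = 1
       \<and> (\<forall>n. \<exists>m::nat. bL L p n = real m)"
proof (intro conjI allI impI ballI)
  fix n assume "n \<in> {1..p}"
  then obtain m where "n = m + 1" "m < p" by (metis Suc_eq_plus1 Suc_le_eq atLeastAtMost_iff not0_implies_Suc not_one_le_zero)
  then show "bL L p n = 0" using small by simp
next
  show "bL L p (p + 1) = 1" using recur[of p p L] b0 by simp
next
  fix n assume "p \<le> n"
  then show "bL L p (n + 1) = (\<Sum>k = 0..n - p. real (n choose k) * real ((n + 1) choose k) ^ L * bL L p k)"
    by (rule recur)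
qed (auto simp: b0 nat_valued)

end
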